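(* Let $d,r\ge2$. The subset $\mathcal P=\bigcap_{n\in S}\mathcal H_{W(n),-1}\subseteq(\mathcal M_{d,r})_{\mathbb R}$ is compact, and for every $i\in[r]$ its chart image $\pi_i(\mathcal P)\subseteq M^{(i)}_{d,r}\otimes\mathbb R$ is an integral (lattice) polytope. Consequently $\mathcal P$ is an integral PL polytope which is chart-Gorenstein–Fano.
   Context: The polyptych lattice $\mathcal M_{d,r}$ over $\mathbb Z$: coordinates $(\mathbf u,\mathbf w)\in\mathbb Z^d\times\mathbb Z^r$; charts $M^{(i)}_{d,r}=\{w_i=0\}$, $i\in[r]$; mutations $\mu_{i,i+1}(\mathbf u,\mathbf w)=(\mathbf u,w_1,\dots,w_{i-1},\min_ju_j-\sum_kw_k,0,w_{i+2},\dots,w_r)$, others by composition/inversion; $(\mathcal M_{d,r})_{\mathbb R}$ uses the same formulas on $\mathbb R$-coordinates, with chart maps $\pi_i$. $\mathbf 1$ is the all-ones vector, $\varepsilon_j$ standard basis vectors. $\mathbb M_{d,r}=\{(\mathbf u,\mathbf w):\min_ju_j=0\}$ is identified with elements via $\varphi_i(\mathbf u,\mathbf w)=(\mathbf u+\langle\mathbf 1,\mathbf w\rangle\mathbf 1,\mathbf w)$ with $i$-th $\mathbf w$-coordinate set to $0$; $\varphi_i^{-1}(\mathbf u,\mathbf w)=(\mathbf u-\min(\mathbf u)\mathbf 1,\mathbf w+(\min(\mathbf u)-\langle\mathbf 1,\mathbf w\rangle)\varepsilon_i)$, which makes sense over $\mathbb R$. $T_{d,r}=\{(\mathbf a,\mathbf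 b)\in\mathbb Z^d\times\mathbb Z^r:\sum_ja_j=\min_ib_i\}$; for $(\mathbf a,\mathbf b)\in T_{d,r}$ the point $f_{\mathbf a,\mathbf b}$ of $\mathcal M_{d,r}$ is given in chart $i$ (over $\mathbb R$) by $x\mapsto\langle\mathbf a,\mathbf u'\rangle+\langle\mathbf b,\mathbf w'\rangle$ where $(\mathbf u',\mathbf w')=\varphi_i^{-1}(x)$. The same constructions with $d,r$ swapped give $\mathcal M_{r,d}$, $\mathbb M_{r,d}$, charts $M^{(i)}_{r,d}$ (coordinates $(\mathbf y,\mathbf z)\in\mathbb Z^r\times\mathbb Z^d$, $z_i=0$), maps $\varphi_i$. For $n=(\mathbf y,\mathbf z)\in\mathbb M_{r,d}$ put $\mathsf v_{r,d}(n)=(\mathbf z,\mathbf y+\langle\mathbf 1,\mathbf z\rangle\mathbf 1)\in T_{d,r}$ and $W(n)=f_{\mathsf v_{r,d}(n)}$, a point of $\mathcal M_{d,r}$. PL half-space: $\mathcal H_{p,a}=\{m\in(\mathcal M_{d,r})_{\mathbb R}:p(m)\ge a\}$. Let $S^{(1)}\subseteq M^{(1)}_{r,d}$ be $\{(\varepsilon_1,\mathbf 0),\dots,(\varepsilon_r,\mathbf 0),\pm(\mathbf 1,\mathbf 0),\pm(\mathbf 1,\varepsilon_2),\dots,\pm(\mathbf 1,\varepsilon_d)\}$ (first component in $\mathbb Z^r$, second in $\mathbb Z^d$), and $S=\varphi_1^{-1}(S^{(1)})\subseteq\mathbb M_{r,d}$. A PL polytope is a compact finite intersection of PL half-spaces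 (with integer points and parameters); it is integral if every chart image is a lattice polytope; it is chart-Gorenstein–Fano if it is integral and of the form $\bigcap_i\mathcal H_{p_i,-1}$ with $p_i$ points. *)

theory Defs
  imports "HOL-Analysis.Analysis"
begin

text \<open>Coordinates of (M_{d,r})_R: pairs (u,w) in R^d x R^r, index sets [d], [r]
  rendered as finite types 'd, 'r. The same (polymorphic) definitions serve for M_{r,d}.\<close>

definition vmin :: "real^'n \<Rightarrow> real" where
  "vmin u = Min (range (\<lambda>j. u $ j))"

definition vsum :: "real^'n \<Rightarrow> real" where
  "vsum w = (\<Sum>k\<in>UNIV. w $ k)"

definition ones :: "real^'n" where
  "ones = (\<chi> j. 1)"

definition MMR :: "((real^'a) \<times> (real^'b)) set" where
  "MMR = {(u, w). vmin u = 0}"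

definition chart :: "'b \<Rightarrow> ((real^'a) \<times> (real^'b)) set" where
  "chart i = {(u, w). w $ i = 0}"

text \<open>phi_i (= chart map pi_i) and its inverse.\<close>
definition phi :: "'b \<Rightarrow> (real^'a) \<times> (real^'b) \<Rightarrow> (real^'a) \<times> (real^'b)" where
  "phi i m = (case m of (u, w) \<Rightarrow> (u + vsum w *\<^sub>R ones, (\<chi> k. if k = i then 0 else w $ k)))"

definition phi_inv :: "'b \<Rightarrow> (real^'a) \<times> (real^'b) \<Rightarrow> (real^'a) \<times> (real^'b)" where
  "phi_inv i x = (case x of (u, w) \<Rightarrow>
      (u - vmin u *\<^sub>R ones, w + (\<chi> k. if k = i then vmin u - vsum w else 0)))"

definition is_int_vec :: "real^'n \<Rightarrow> bool" where
  "is_int_vec v \<longleftrightarrow> (\<forall>j. v $ j \<in> \<int>)"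

definition int_pt :: "(real^'a) \<times> (real^'b) \<Rightarrow> bool" where
  "int_pt m \<longleftrightarrow> is_int_vec (fst m) \<and> is_int_vec (snd m)"

definition Tset :: "((real^'a) \<times> (real^'b)) set" where
  "Tset = {(a, b). int_pt (a, b) \<and> vsum a = vmin b}"

definition f_chart :: "(real^'a) \<times> (real^'b) \<Rightarrow> 'b \<Rightarrow> (real^'a) \<times> (real^'b) \<Rightarrow> real" where
  "f_chart p i x = (case phi_inv i x of (u', w') \<Rightarrow> fst p \<bullet> u' + snd p \<bullet> w')"

definition Hs :: "(real^'a) \<times> (real^'b) \<Rightarrow> real \<Rightarrow> ((real^'a) \<times> (real^'b)) set" where
  "Hs p c = {m \<in> MMR. \<forall>i. f_chart p i (phi i m) \<ge> c}"

definition v_rd :: "(real^'r) \<times> (real^'d) \<Rightarrow> (real^'d) \<times> (real^'r)" where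
  "v_rd n = (case n of (y, z) \<Rightarrow> (z, y + vsum z *\<^sub>R ones))"

text \<open>The index 1 of [d] is the least element of the finite linear order 'd.\<close>
definition first_idx :: "'d::{finite,linorder}" where
  "first_idx = Min UNIV"

definition S1 :: "((real^'r) \<times> (real^'d::{finite,linorder})) set" where
  "S1 = {(axis j 1, 0) | j. True}
      \<union> {(ones, 0), - (ones, 0)}
      \<union> {(ones, axis k 1) | k. k \<noteq> first_idx}
      \<union> {- (ones, axis k 1) | k. k \<noteq> first_idx}"

definition Sset :: "((real^'r) \<times> (real^'d::{finite,linorder})) set" where
  "Sset = phi_inv first_idx ` S1"

definition Ppoly :: "((real^'d::{finite,linorder}) \<times> (real^'r)) set" where
  "Ppoly = {m \<in> MMR. \<forall>n\<in>(Sset :: ((real^'r) \<times> (real^'d::{finite,linorder})) set). m \<in> Hs (v_rd n) (-1)}"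

definition lattice_polytope :: "((real^'a) \<times> (real^'b)) set \<Rightarrow> bool" where
  "lattice_polytope Q \<longleftrightarrow> (\<exists>V. finite V \<and> (\<forall>v\<in>V. int_pt v) \<and> Q = convex hull V)"

definition PL_polytope :: "((real^'a) \<times> (real^'b)) set \<Rightarrow> bool" where
  "PL_polytope Q \<longleftrightarrow> compact Q \<and>
     (\<exists>F. finite F \<and> (\<forall>(p, c)\<in>F. p \<in> Tset \<and> c \<in> \<int>) \<and>
          Q = MMR \<inter> \<Inter>{Hs p c | p c. (p, c) \<in> F})"

definition integral_PL_polytope :: "((real^'a) \<times> (real^'b)) set \<Rightarrow> bool" where
  "integral_PL_polytope Q \<longleftrightarrow> PL_polytope Q \<and> (\<forall>i. lattice_polytope (phi i ` Q))"

definition chart_GF :: "((real^'a) \<times> (real^'b)) set \<Rightarrow> bool" where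
  "chart_GF Q \<longleftrightarrow> integral_PL_polytope Q \<and>
     (\<exists>F. finite F \<and> F \<subseteq> Tset \<and> Q = MMR \<inter> \<Inter>{Hs p (-1) | p. p \<in> F})"

end

theory Submission
  imports Defs
begin


lemma vmin_le: "vmin u \<le> u $ k"
  unfolding vmin_def by (rule Min_le) auto

lemma vmin_ex: "\<exists>k. u $ k = vmin u"
proof -
  have "vmin u \<in> range (\<lambda>j. u $ j)" unfolding vmin_def by (rule Min_in) auto
  then show ?thesis by auto
qed

lemma vmin_eqI: "(\<And>k. c \<le> u $ k) \<Longrightarrow> u $ kk = c \<Longrightarrow> vmin u = c"
  by (metis vmin_ex vmin_le order_antisym)

lemma vmin_add_ones: "vmin (u + c *\<^sub>R ones) = vmin u + c"
  using vmin_le[of u] vmin_ex[of u]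
  by (auto intro!: vmin_eqI simp: ones_def)

lemma vsum_add: "vsum (a + b) = vsum a + vsum b"
  by (simp add: vsum_def sum.distrib)

lemma vsum_axis: "vsum (axis k c) = c"
  by (simp add: vsum_def axis_def)

lemma vsum_upd0: "vsum (\<chi> k. if k = i then 0 else w $ k) = vsum w - w $ i"
proof -
  have "vsum w = (\<Sum>k\<in>UNIV. (\<chi> k. if k = i then 0 else w $ k) $ k) + w $ i"
    unfolding vsum_def by (simp add: sum.If_cases Int_UNIV_left sum.remove[of UNIV i] sum_diff1 Diff_eq)
  then show ?thesis unfolding vsum_def by simp
qed

lemma inner_ones: "ones \<bullet> w = vsum w" "w \<bullet> ones = vsum w"
  by (simp_all add: ones_def vsum_def inner_vec_def)

lemma phi_inv_phi:
  assumes "vmin u = 0"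
  shows "phi_inv i (phi i (u, w)) = (u, w)"
proof -
  have "vmin (u + vsum w *\<^sub>R ones) = vsum w" by (simp add: vmin_add_ones assms)
  then show ?thesis
    by (simp add: phi_def phi_inv_def vsum_upd0 vec_eq_iff)
qed



lemma Hs_iff: "(u, w) \<in> Hs p c \<longleftrightarrow> vmin u = 0 \<and> fst p \<bullet> u + snd p \<bullet> w \<ge> c"
  by (auto simp: Hs_def MMR_def f_chart_def phi_inv_phi)

lemma vmin_axis:
  assumes "CARD('r::finite) \<ge> 2"
  shows "vmin (axis (j::'r) (1::real)) = 0"
proof -
  obtain k where "k \<noteq> j"
  proof (rule ccontr)
    assume "\<not> thesis"
    with that have "UNIV = {j}" by auto
    then have "CARD('r) = card {j}" by (simp only:)
    then have "CARD('r) = 1" by simp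
    with assms show False by simp
  qed
  then show ?thesis by (intro vmin_eqI[where kk=k]) (auto simp: axis_def)
qed

lemma vmin_ones: "vmin (c *\<^sub>R ones) = c"
  by (intro vmin_eqI) (auto simp: ones_def)



lemma ones_nth[simp]: "ones $ k = 1" by (simp add: ones_def)

lemma axis_nth2: "axis i x $ j = (if j = i then x else 0)" by (simp add: axis_def)

lemma vsum_uminus: "vsum (- v) = - vsum v"
  by (simp add: vsum_def sum_negf)

lemma vmin_uminus_ones: "vmin (- ones) = -1"
  using vmin_ones[of "-1"] by (simp add: ones_def vec_eq_iff)

lemma vmin_ones1: "vmin ones = 1"
  using vmin_ones[of 1] by simp

lemma Sset_eq:
  assumes "CARD('r::finite) \<ge> 2"
  shows "(Sset :: ((real^'r) \<times> (real^'d::{finite,linorder})) set) =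
     {(axis j 1, 0) | j. True} \<union> {(0, axis k 1) | k. True} \<union> {(0, - axis k 1) | k. True}"
proof -
  let ?f = "first_idx :: 'd"
  have e1: "phi_inv ?f (axis j 1 :: real^'r, 0) = (axis j 1, 0)" for j
    using vmin_axis[OF assms, of j] by (simp add: phi_inv_def vsum_def vec_eq_iff)
  have e2: "phi_inv ?f (ones :: real^'r, 0) = (0, axis ?f 1)"
    by (simp add: phi_inv_def vsum_def vec_eq_iff vmin_ones1 axis_nth2)
  have e3: "phi_inv ?f (- (ones :: real^'r, 0)) = (0, - axis ?f 1)"
    by (simp add: phi_inv_def vsum_def vec_eq_iff vmin_uminus_ones axis_nth2)
  have e4: "phi_inv ?f (ones :: real^'r, axis k 1) = (0, axis k 1)" if "k \<noteq> ?f" for k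
    using that by (simp add: phi_inv_def vsum_axis vec_eq_iff vmin_ones1 axis_nth2)
  have e5: "phi_inv ?f (- (ones :: real^'r, axis k 1)) = (0, - axis k 1)" if "k \<noteq> ?f" for k
    using that by (simp add: phi_inv_def vsum_axis vsum_uminus vec_eq_iff vmin_uminus_ones axis_nth2)
  show ?thesis
    unfolding Sset_def S1_def
  proof (intro equalityI subsetI)
    fix x :: "(real^'r) \<times> (real^'d::{finite,linorder})"
    assume "x \<in> phi_inv ?f ` ({(axis j 1, 0) |j. True} \<union> {(ones, 0), - (ones, 0)} \<union>
             {(ones, axis k 1) |k. k \<noteq> first_idx} \<union> {- (ones, axis k 1) |k. k \<noteq> first_idx})"
    then show "x \<in> {(axis j 1, 0) | j. True} \<union> {(0, axis k 1) | k. True} \<union> {(0, - axis k 1) | k. True}"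
      using e1 e2 e3 e4 e5 by auto
  next
    fix x :: "(real^'r) \<times> (real^'d::{finite,linorder})"
    assume "x \<in> {(axis j 1, 0) | j. True} \<union> {(0, axis k 1) | k. True} \<union> {(0, - axis k 1) | k. True}"
    then consider j where "x = (axis j 1, 0)" | k where "x = (0, axis k 1)" | k where "x = (0, - axis k 1)"
      by auto
    then show "x \<in> phi_inv ?f ` ({(axis j 1, 0) |j. True} \<union> {(ones, 0), - (ones, 0)} \<union>
             {(ones, axis k 1) |k. k \<noteq> first_idx} \<union> {- (ones, axis k 1) |k. k \<noteq> first_idx})"
    proof cases
      case (1 j) then show ?thesis using e1[of j] by (auto intro!: image_eqI)
    next
      case (2 k) then show ?thesis
      proof (cases "k = ?f")
        case True then show ?thesis using 2 e2 by (intro image_eqI[where x="(ones, 0)"]) auto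
      next
        case False then show ?thesis using 2 e4[of k] by (intro image_eqI[where x="(ones, axis k 1)"]) auto
      qed
    next
      case (3 k) then show ?thesis
      proof (cases "k = ?f")
        case True then show ?thesis using 3 e3 by (intro image_eqI[where x="- (ones, 0)"]) auto
      next
        case False then show ?thesis using 3 e5[of k] by (intro image_eqI[where x="- (ones, axis k 1)"]) auto
      qed
    qed
  qed
qed



lemma vsum_zero: "vsum 0 = 0" by (simp add: vsum_def)

lemma ball_range: "(\<forall>p\<in>range f. P p) = (\<forall>x. P (f x))" by auto

lemma setcomp_range: "{f j | j. True} = range f" by auto

lemma vrd_Sset:
  assumes "CARD('r::finite) \<ge> 2"
  shows "v_rd ` (Sset :: ((real^'r) \<times> (real^'d::{finite,linorder})) set) =
     range (\<lambda>j. (0, axis j 1)) \<union> range (\<lambda>k. (axis k 1, ones)) \<union> range (\<lambda>k. (- axis k 1, - ones))"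
  unfolding Sset_eq[OF assms] setcomp_range image_Un image_image
  by (simp add: v_rd_def vsum_axis vsum_uminus vsum_zero)

definition Pc :: "((real^'a::finite) \<times> (real^'b::finite)) set" where
  "Pc = {(u, w). vmin u = 0 \<and> (\<forall>j. -1 \<le> w $ j) \<and> (\<forall>k. -1 \<le> u $ k + vsum w \<and> u $ k + vsum w \<le> 1)}"

lemma Ppoly_eq:
  assumes "CARD('r::finite) \<ge> 2"
  shows "(Ppoly :: ((real^'d::{finite,linorder}) \<times> (real^'r)) set) = Pc"
proof -
  have "Ppoly = {m \<in> MMR. \<forall>p \<in> v_rd ` (Sset :: ((real^'r) \<times> (real^'d::{finite,linorder})) set). m \<in> Hs p (-1)}"
    unfolding Ppoly_def by auto
  also have "\<dots> = Pc"
    unfolding vrd_Sset[OF assms]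
    by (auto simp: Pc_def MMR_def Hs_iff inner_axis' inner_ones inner_axis ball_Un ball_range inner_minus_left; smt (verit))
  finally show ?thesis .
qed



lemma vmin_eq0_iff: "vmin u = 0 \<longleftrightarrow> (\<forall>k. 0 \<le> u $ k) \<and> (\<exists>k. u $ k = 0)"
  by (metis vmin_eqI vmin_ex vmin_le)

lemma cont_nth: "continuous_on UNIV (\<lambda>z::(real^'a::finite) \<times> (real^'b::finite). fst z $ k)"
  by (intro continuous_intros)+

lemma cont_nth2: "continuous_on UNIV (\<lambda>z::(real^'a::finite) \<times> (real^'b::finite). snd z $ k)"
  by (intro continuous_intros)+

lemma cont_vsum: "continuous_on UNIV (\<lambda>z::(real^'a::finite) \<times> (real^'b::finite). vsum (snd z))"
  unfolding vsum_def by (intro continuous_intros)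

lemma closed_Pc: "closed (Pc :: ((real^'a::finite) \<times> (real^'b::finite)) set)"
proof -
  have "Pc = (\<Union>k0. {z::(real^'a) \<times> (real^'b). fst z $ k0 = 0} \<inter> {z. \<forall>k. 0 \<le> fst z $ k} \<inter> {z. \<forall>j. -1 \<le> snd z $ j}
     \<inter> {z. \<forall>k. -1 \<le> fst z $ k + vsum (snd z)} \<inter> {z. \<forall>k. fst z $ k + vsum (snd z) \<le> 1})"
    by (auto simp: Pc_def vmin_eq0_iff)
  also have "closed \<dots>"
    by (intro closed_UN closed_Int closed_Collect_all closed_Collect_le closed_Collect_eq ballI finite
          continuous_intros cont_nth cont_nth2 cont_vsum)
  finally show ?thesis .
qed

lemma vsum_ge:
  assumes "\<forall>l. -1 \<le> w $ l"
  shows "w $ j - real (CARD('b::finite) - 1) \<le> vsum (w :: real^'b)"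
proof -
  have "vsum w = w $ j + (\<Sum>l\<in>UNIV - {j}. w $ l)"
    unfolding vsum_def by (simp add: sum.remove[of UNIV j])
  moreover have "(\<Sum>l\<in>UNIV - {j}. w $ l) \<ge> (\<Sum>l\<in>UNIV - {j}. -1)"
    using assms by (intro sum_mono) auto
  moreover have "(\<Sum>l\<in>(UNIV::'b set) - {j}. (-1::real)) = - real (CARD('b) - 1)"
    by (simp add: card_Diff_singleton)
  ultimately show ?thesis by linarith
qed

lemma bounded_Pc: "bounded (Pc :: ((real^'a::finite) \<times> (real^'b::finite)) set)"
proof -
  let ?C = "real CARD('b)"
  have "(Pc :: ((real^'a) \<times> (real^'b)) set) \<subseteq> cbox (0, - ones) (2 *\<^sub>R ones, ?C *\<^sub>R ones)"
  proof
    fix z :: "(real^'a) \<times> (real^'b)" assume "z \<in> Pc"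
    then obtain u w where z: "z = (u, w)" and m: "vmin u = 0" and hw: "\<forall>j. -1 \<le> w $ j"
      and hk: "\<forall>k. -1 \<le> u $ k + vsum w \<and> u $ k + vsum w \<le> 1"
      by (auto simp: Pc_def)
    from m obtain k0 where k0: "u $ k0 = 0" and pos: "\<forall>k. 0 \<le> u $ k" by (auto simp: vmin_eq0_iff)
    have s1: "-1 \<le> vsum w" "vsum w \<le> 1" using hk k0 by (metis add_0)+
    have "u $ k \<le> 2" for k using hk s1 by (smt (verit))
    moreover have "w $ j \<le> ?C" for j
      using vsum_ge[OF hw, of j] s1 by (simp add: of_nat_diff)
    ultimately show "z \<in> cbox (0, - ones) (2 *\<^sub>R ones, ?C *\<^sub>R ones)"
      using z pos hw by (auto simp: mem_box_cart)
  qed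
  then show ?thesis using bounded_cbox bounded_subset by blast
qed

lemma compact_Pc: "compact (Pc :: ((real^'a::finite) \<times> (real^'b::finite)) set)"
  using closed_Pc bounded_Pc compact_eq_bounded_closed by blast



definition Qc :: "'b::finite \<Rightarrow> ((real^'a::finite) \<times> (real^'b)) set" where
  "Qc i = {(x, w). w $ i = 0 \<and> (\<forall>k. -1 \<le> x $ k \<and> x $ k \<le> 1) \<and> (\<forall>j. -1 \<le> w $ j) \<and> (\<forall>k. vsum w \<le> x $ k + 1)}"

lemma phi_Pc: "phi i ` Pc = Qc i"
proof (intro equalityI subsetI)
  fix z assume "z \<in> phi i ` Pc"
  then obtain u w where z: "z = phi i (u, w)" and m: "vmin u = 0" and hw: "\<forall>j. -1 \<le> w $ j"
      and hk: "\<forall>k. -1 \<le> u $ k + vsum w \<and> u $ k + vsum w \<le> 1"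
    by (auto simp: Pc_def)
  from m have pos: "\<forall>k. 0 \<le> u $ k" by (auto simp: vmin_eq0_iff)
  show "z \<in> Qc i"
    using hw hk pos hw[rule_format, of i]
    by (auto simp: z phi_def Qc_def vsum_upd0) (smt (verit))+
next
  fix z assume "z \<in> Qc i"
  then obtain x w where z: "z = (x, w)" and wi: "w $ i = 0" and hx: "\<forall>k. -1 \<le> x $ k \<and> x $ k \<le> 1"
     and hw: "\<forall>j. -1 \<le> w $ j" and hs: "\<forall>k. vsum w \<le> x $ k + 1"
    by (auto simp: Qc_def)
  define \<mu> where "\<mu> = vmin x"
  define w2 where "w2 = w + (\<chi> k. if k = i then \<mu> - vsum w else 0)"
  have pi: "phi_inv i (x, w) = (x - \<mu> *\<^sub>R ones, w2)"
    unfolding phi_inv_def \<mu>_def w2_def by simp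
  have vs2: "vsum w2 = \<mu>"
  proof -
    have "vsum (\<chi> k. if k = i then \<mu> - vsum w else 0) = \<mu> - vsum w"
      using vsum_axis[of i "\<mu> - vsum w"] by (simp add: axis_def)
    then show ?thesis by (simp add: w2_def vsum_add)
  qed
  have vm: "vmin (x - \<mu> *\<^sub>R ones) = 0"
    using vmin_add_ones[of x "-\<mu>"] by (simp add: \<mu>_def)
  obtain k0 where k0: "x $ k0 = \<mu>" using vmin_ex \<mu>_def by metis
  have w2j: "-1 \<le> w2 $ j" for j
  proof (cases "j = i")
    case True
    then show ?thesis using hs[rule_format, of k0] k0 wi by (simp add: w2_def)
  next
    case False
    then show ?thesis using hw by (simp add: w2_def)
  qed
  have "(x - \<mu> *\<^sub>R ones, w2) \<in> Pc"
    unfolding Pc_def using vm w2j hx by (simp add: vs2)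
  moreover have "phi i (x - \<mu> *\<^sub>R ones, w2) = (x - \<mu> *\<^sub>R ones + \<mu> *\<^sub>R ones, \<chi> k. if k = i then 0 else w2 $ k)"
    by (simp add: phi_def vs2)
  moreover have "\<dots> = z"
    by (simp add: z w2_def vec_eq_iff wi)
  ultimately show "z \<in> phi i ` Pc" by (metis image_eqI)
qed



lemma Qc_inter: "Qc i = {z::(real^'a::finite) \<times> (real^'b::finite). (0, axis i 1) \<bullet> z = 0}
   \<inter> \<Inter>(range (\<lambda>k. {z. (axis k 1, 0) \<bullet> z \<le> 1}))
   \<inter> \<Inter>(range (\<lambda>k. {z. (axis k 1, 0) \<bullet> z \<ge> -1}))
   \<inter> \<Inter>(range (\<lambda>j. {z. (0, axis j 1) \<bullet> z \<ge> -1}))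
   \<inter> \<Inter>(range (\<lambda>k. {z. (- axis k 1, ones) \<bullet> z \<le> 1}))"
  by (auto simp: Qc_def inner_axis' inner_ones inner_minus_left; smt (verit))

lemma polyhedron_Qc: "polyhedron (Qc i :: ((real^'a::finite) \<times> (real^'b::finite)) set)"
  unfolding Qc_inter
  by (intro polyhedron_Int polyhedron_Inter polyhedron_hyperplane polyhedron_halfspace_le
      polyhedron_halfspace_ge finite_imageI finite; auto simp: polyhedron_halfspace_le polyhedron_halfspace_ge)

lemma bounded_Qc: "bounded (Qc i :: ((real^'a::finite) \<times> (real^'b::finite)) set)"
proof -
  let ?C = "real CARD('b) + 2"
  have "(Qc i :: ((real^'a) \<times> (real^'b)) set) \<subseteq> cbox (- ones, - ones) (ones, ?C *\<^sub>R ones)"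
  proof
    fix z :: "(real^'a) \<times> (real^'b)" assume "z \<in> Qc i"
    then obtain x w where z: "z = (x, w)" and hx: "\<forall>k. -1 \<le> x $ k \<and> x $ k \<le> 1"
     and hw: "\<forall>j. -1 \<le> w $ j" and hs: "\<forall>k. vsum w \<le> x $ k + 1"
      by (auto simp: Qc_def)
    obtain k :: 'a where True by simp
    have s1: "vsum w \<le> 2" using hs[rule_format, of k] hx[rule_format, of k] by linarith
    have "w $ j \<le> ?C" for j
      using vsum_ge[OF hw, of j] s1 by (simp add: of_nat_diff)
    then show "z \<in> cbox (- ones, - ones) (ones, ?C *\<^sub>R ones)"
      using z hx hw by (auto simp: mem_box_cart)
  qed
  then show ?thesis using bounded_cbox bounded_subset by blast
qed

lemma compact_Qc: "compact (Qc i :: ((real^'a::finite) \<times> (real^'b::finite)) set)"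
  using bounded_Qc polyhedron_Qc polyhedron_imp_closed compact_eq_bounded_closed by blast



lemma ev_lin:
  fixes c a t :: real
  assumes "c \<le> a" "t = 0 \<or> c < a"
  shows "\<forall>\<^sub>F e in at_right 0. c \<le> a + e * t \<and> c \<le> a - e * t"
proof (cases "t = 0")
  case True then show ?thesis using assms by simp
next
  case False
  then have ca: "c < a" using assms by simp
  have l1: "((\<lambda>e. a + e * t) \<longlongrightarrow> a + 0 * t) (at_right 0)"
    by (intro tendsto_intros)
  have l2: "((\<lambda>e. a - e * t) \<longlongrightarrow> a - 0 * t) (at_right 0)"
    by (intro tendsto_intros)
  have "\<forall>\<^sub>F e in at_right 0. c < a + e * t" using order_tendstoD(1)[OF l1] ca by simp
  moreover have "\<forall>\<^sub>F e in at_right 0. c < a - e * t" using order_tendstoD(1)[OF l2] ca by simp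
  ultimately show ?thesis by eventually_elim auto
qed

lemma Qc_perturb:
  fixes x dx :: "real^'a::finite" and w dw :: "real^'b::finite"
  assumes z: "(x, w) \<in> Qc i" and di: "dw $ i = 0"
    and cx: "\<forall>k. dx $ k = 0 \<or> (-1 < x $ k \<and> x $ k < 1)"
    and cw: "\<forall>j. dw $ j = 0 \<or> -1 < w $ j"
    and cs: "\<forall>k. dx $ k = vsum dw \<or> vsum w < x $ k + 1"
  shows "\<forall>\<^sub>F e in at_right 0. (x + e *\<^sub>R dx, w + e *\<^sub>R dw) \<in> Qc i \<and> (x - e *\<^sub>R dx, w - e *\<^sub>R dw) \<in> Qc i"
proof -
  from z have wi: "w $ i = 0" and hx: "\<forall>k. -1 \<le> x $ k \<and> x $ k \<le> 1"
     and hw: "\<forall>j. -1 \<le> w $ j" and hs: "\<forall>k. vsum w \<le> x $ k + 1"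
    by (auto simp: Qc_def)
  have e1: "\<forall>\<^sub>F e in at_right 0. \<forall>k. -1 \<le> x $ k + e * dx $ k \<and> -1 \<le> x $ k - e * dx $ k"
    by (rule eventually_all_finite, rule ev_lin) (use hx cx in auto)
  have e2: "\<forall>\<^sub>F e in at_right 0. \<forall>k. -1 \<le> - x $ k + e * (- dx $ k) \<and> -1 \<le> - x $ k - e * (- dx $ k)"
    by (rule eventually_all_finite, rule ev_lin) (use hx cx in \<open>auto simp: less_le\<close>)
  have e3: "\<forall>\<^sub>F e in at_right 0. \<forall>j. -1 \<le> w $ j + e * dw $ j \<and> -1 \<le> w $ j - e * dw $ j"
    by (rule eventually_all_finite, rule ev_lin) (use hw cw in auto)
  have e4: "\<forall>\<^sub>F e in at_right 0. \<forall>k. 0 \<le> (x $ k + 1 - vsum w) + e * (dx $ k - vsum dw)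
       \<and> 0 \<le> (x $ k + 1 - vsum w) - e * (dx $ k - vsum dw)"
    by (rule eventually_all_finite, rule ev_lin) (use hs cs in auto)
  have vs: "vsum (w + e *\<^sub>R dw) = vsum w + e * vsum dw" "vsum (w - e *\<^sub>R dw) = vsum w - e * vsum dw" for e
    by (simp_all add: vsum_def sum.distrib sum_subtractf sum_distrib_left)
  from e1 e2 e3 e4 show ?thesis
  proof eventually_elim
    case (elim e)
    then show ?case
      unfolding Qc_def using wi di by (auto simp: vs algebra_simps)
  qed
qed

lemma not_extreme:
  fixes z d :: "'a::real_vector"
  assumes "d \<noteq> 0" and ev: "\<forall>\<^sub>F e in at_right 0. z + e *\<^sub>R d \<in> S \<and> z - e *\<^sub>R d \<in> S"
  shows "\<not> z extreme_point_of S"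
proof -
  obtain b where b: "b > (0::real)" and hb: "\<And>y. 0 < y \<Longrightarrow> y < b \<Longrightarrow> z + y *\<^sub>R d \<in> S \<and> z - y *\<^sub>R d \<in> S"
    using ev unfolding eventually_at_right_field by blast
  define e where "e = b / 2"
  have e: "0 < e" "e < b" using b by (auto simp: e_def)
  have ne: "z - e *\<^sub>R d \<noteq> z + e *\<^sub>R d"
  proof
    assume "z - e *\<^sub>R d = z + e *\<^sub>R d"
    then have "(z + e *\<^sub>R d) - (z - e *\<^sub>R d) = 0" by simp
    then have "e *\<^sub>R d + e *\<^sub>R d = 0" by (simp add: algebra_simps)
    then have "(2::real) *\<^sub>R (e *\<^sub>R d) = 0" by (simp only: scaleR_2)
    then have "e *\<^sub>R d = 0" by simp
    then show False using e assms(1) by simp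
  qed
  have "midpoint (z - e *\<^sub>R d) (z + e *\<^sub>R d) = z"
    by (simp add: midpoint_def algebra_simps flip: scaleR_left_distrib)
  then have "z \<in> open_segment (z - e *\<^sub>R d) (z + e *\<^sub>R d)"
    using midpoint_in_open_segment[of "z - e *\<^sub>R d" "z + e *\<^sub>R d"] ne by simp
  then show ?thesis using hb[OF e] unfolding extreme_point_of_def by blast
qed



lemma strict_of_Int: "(c::real) \<in> \<int> \<Longrightarrow> c \<le> a \<Longrightarrow> a \<notin> \<int> \<Longrightarrow> c < a"
  by (cases "c = a") auto

lemma vsum_int: "(\<forall>j. w $ j \<in> \<int>) \<Longrightarrow> vsum (w::real^'b::finite) \<in> \<int>"
  unfolding vsum_def by (intro Ints_sum) auto

lemma vsum_split: "vsum (w::real^'b::finite) = w $ j + (\<Sum>l\<in>UNIV - {j}. w $ l)"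
  unfolding vsum_def by (simp add: sum.remove[of UNIV j])

lemma extreme_Qc_int:
  fixes z :: "(real^'a::finite) \<times> (real^'b::finite)"
  assumes ext: "z extreme_point_of Qc i"
  shows "int_pt z"
proof (rule ccontr)
  assume nint: "\<not> int_pt z"
  obtain x w where z: "z = (x, w)" by (cases z)
  have zQ: "(x, w) \<in> Qc i" using ext z by (simp add: extreme_point_of_def)
  then have wi: "w $ i = 0" and hx: "\<forall>k. -1 \<le> x $ k \<and> x $ k \<le> 1"
     and hw: "\<forall>j. -1 \<le> w $ j" and hs: "\<forall>k. vsum w \<le> x $ k + 1"
    by (auto simp: Qc_def)
  have m1: "(-1::real) \<in> \<int>" "(1::real) \<in> \<int>" "(0::real) \<in> \<int>" by simp_all
  have xstrict: "-1 < x $ k \<and> x $ k < 1" if "x $ k \<notin> \<int>" for k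
    using hx that strict_of_Int[OF m1(1), of "x $ k"] strict_of_Int[OF m1(1), of "- x $ k"] by force
  have wstrict: "-1 < w $ j" if "w $ j \<notin> \<int>" for j
    using hw that strict_of_Int[OF m1(1), of "w $ j"] by force
  have sstrict: "vsum w < x $ k + 1" if "x $ k + 1 - vsum w \<notin> \<int>" for k
    using hs that strict_of_Int[OF m1(3), of "x $ k + 1 - vsum w"] by force
  have "\<not> (x, w) extreme_point_of Qc i"
  proof (cases "\<exists>j1 j2. j1 \<noteq> j2 \<and> w $ j1 \<notin> \<int> \<and> w $ j2 \<notin> \<int>")
    case True
    then obtain j1 j2 where j: "j1 \<noteq> j2" "w $ j1 \<notin> \<int>" "w $ j2 \<notin> \<int>" by blast
    have ji: "j1 \<noteq> i" "j2 \<noteq> i" using j wi by auto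
    define dw where "dw = axis j1 (1::real) - axis j2 1"
    have vd: "vsum dw = 0" by (simp add: dw_def vsum_def sum_subtractf axis_def)
    have "\<forall>\<^sub>F e in at_right 0. (x + e *\<^sub>R 0, w + e *\<^sub>R dw) \<in> Qc i \<and> (x - e *\<^sub>R 0, w - e *\<^sub>R dw) \<in> Qc i"
    proof (rule Qc_perturb[OF zQ])
      show "dw $ i = 0" using ji by (simp add: dw_def axis_nth2)
      show "\<forall>j. dw $ j = 0 \<or> -1 < w $ j" using j wstrict by (simp add: dw_def axis_nth2)
      show "\<forall>k. (0::real^'a) $ k = vsum dw \<or> vsum w < x $ k + 1" using vd by simp
    qed simp
    moreover have "(0, dw) \<noteq> 0" using j(1) by (auto simp: dw_def vec_eq_iff axis_nth2 zero_prod_def)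
    ultimately show ?thesis
      by (intro not_extreme[where d="(0, dw)"]) auto
  next
    case False
    note F1 = False
    show ?thesis
    proof (cases "\<exists>j0. w $ j0 \<notin> \<int>")
      case True
      then obtain j0 where j0: "w $ j0 \<notin> \<int>" by blast
      have uniq: "w $ j \<in> \<int>" if "j \<noteq> j0" for j using F1 j0 that by blast
      have j0i: "j0 \<noteq> i" using j0 wi by auto
      have "(\<Sum>l\<in>UNIV - {j0}. w $ l) \<in> \<int>" using uniq by (intro Ints_sum) auto
      then have vsn: "vsum w \<notin> \<int>"
      proof (intro notI)
        assume a: "vsum w \<in> \<int>" and b: "(\<Sum>l\<in>UNIV - {j0}. w $ l) \<in> \<int>"
        have "vsum w - (\<Sum>l\<in>UNIV - {j0}. w $ l) \<in> \<int>" using a b by (rule Ints_diff)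
        moreover have "vsum w - (\<Sum>l\<in>UNIV - {j0}. w $ l) = w $ j0" using vsum_split[of w j0] by simp
        ultimately show False using j0 by simp
      qed
      define dw where "dw = axis j0 (1::real)"
      define dx where "dx = (\<chi> k. if x $ k \<in> \<int> then 0 else (1::real))"
      have vd: "vsum dw = 1" by (simp add: dw_def vsum_axis)
      have "\<forall>\<^sub>F e in at_right 0. (x + e *\<^sub>R dx, w + e *\<^sub>R dw) \<in> Qc i \<and> (x - e *\<^sub>R dx, w - e *\<^sub>R dw) \<in> Qc i"
      proof (rule Qc_perturb[OF zQ])
        show "dw $ i = 0" using j0i by (simp add: dw_def axis_nth2)
        show "\<forall>k. dx $ k = 0 \<or> (-1 < x $ k \<and> x $ k < 1)" using xstrict by (simp add: dx_def)
        show "\<forall>j. dw $ j = 0 \<or> -1 < w $ j" using wstrict j0 by (simp add: dw_def axis_nth2)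
        show "\<forall>k. dx $ k = vsum dw \<or> vsum w < x $ k + 1"
        proof
          fix k show "dx $ k = vsum dw \<or> vsum w < x $ k + 1"
          proof (cases "x $ k \<in> \<int>")
            case True
            have "x $ k + 1 - vsum w \<notin> \<int>"
            proof
              assume "x $ k + 1 - vsum w \<in> \<int>"
              then have "(x $ k + 1) - (x $ k + 1 - vsum w) \<in> \<int>" using True by (intro Ints_diff Ints_add) auto
              then show False using vsn by simp
            qed
            then show ?thesis using sstrict by blast
          qed (simp add: dx_def vd)
        qed
      qed
      moreover have "(dx, dw) \<noteq> 0" by (auto simp: dw_def vec_eq_iff axis_nth2 zero_prod_def)
      ultimately show ?thesis
        by (intro not_extreme[where d="(dx, dw)"]) auto
    next
      case False
      then have wint: "\<forall>j. w $ j \<in> \<int>" by blast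
      then obtain k0 where k0: "x $ k0 \<notin> \<int>" using nint z by (auto simp: int_pt_def is_int_vec_def)
      have vsi: "vsum w \<in> \<int>" using vsum_int wint by blast
      define dx where "dx = axis k0 (1::real)"
      have "\<forall>\<^sub>F e in at_right 0. (x + e *\<^sub>R dx, w + e *\<^sub>R 0) \<in> Qc i \<and> (x - e *\<^sub>R dx, w - e *\<^sub>R 0) \<in> Qc i"
      proof (rule Qc_perturb[OF zQ])
        show "\<forall>k. dx $ k = 0 \<or> (-1 < x $ k \<and> x $ k < 1)" using xstrict k0 by (simp add: dx_def axis_nth2)
        show "\<forall>k. dx $ k = vsum 0 \<or> vsum w < x $ k + 1"
        proof
          fix k show "dx $ k = vsum 0 \<or> vsum w < x $ k + 1"
          proof (cases "k = k0")
            case True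
            have "x $ k + 1 - vsum w \<notin> \<int>"
            proof
              assume "x $ k + 1 - vsum w \<in> \<int>"
              then have "(x $ k + 1 - vsum w) + vsum w - 1 \<in> \<int>" using vsi by (intro Ints_diff Ints_add) auto
              then show False using k0 True by simp
            qed
            then show ?thesis using sstrict by blast
          qed (simp add: dx_def axis_nth2 vsum_def)
        qed
      qed simp_all
      moreover have "(dx, 0) \<noteq> 0" by (auto simp: dx_def vec_eq_iff axis_nth2 zero_prod_def)
      ultimately show ?thesis
        by (intro not_extreme[where d="(dx, 0)"]) auto
    qed
  qed
  with ext z show False by simp
qed



lemma vrd_Sset_finite:
  assumes "CARD('r::finite) \<ge> 2"
  shows "finite (v_rd ` (Sset :: ((real^'r) \<times> (real^'d::{finite,linorder})) set))"
  unfolding vrd_Sset[OF assms] by simp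

lemma vrd_Sset_T:
  assumes "CARD('r::finite) \<ge> 2"
  shows "v_rd ` (Sset :: ((real^'r) \<times> (real^'d::{finite,linorder})) set) \<subseteq> Tset"
  unfolding vrd_Sset[OF assms]
  using vmin_axis[OF assms]
  by (auto simp: Tset_def int_pt_def is_int_vec_def axis_nth2 vsum_zero vsum_axis vsum_uminus
      vmin_ones1 vmin_uminus_ones)

lemma lattice_Qc: "lattice_polytope (Qc i :: ((real^'a::finite) \<times> (real^'b::finite)) set)"
  unfolding lattice_polytope_def
proof (intro exI conjI ballI)
  show "finite {v. v extreme_point_of (Qc i :: ((real^'a) \<times> (real^'b)) set)}"
    by (rule finite_polyhedron_extreme_points[OF polyhedron_Qc])
  show "int_pt v" if "v \<in> {v. v extreme_point_of (Qc i :: ((real^'a) \<times> (real^'b)) set)}" for v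
    using that extreme_Qc_int by blast
  show "Qc i = convex hull {v. v extreme_point_of (Qc i :: ((real^'a) \<times> (real^'b)) set)}"
    by (rule Krein_Milman_Minkowski[OF compact_Qc polyhedron_imp_convex[OF polyhedron_Qc]])
qed

theorem mainTheorem18:
  fixes P :: "((real^'d::{finite,linorder}) \<times> (real^'r::finite)) set"
  assumes "CARD('d) \<ge> 2" and "CARD('r) \<ge> 2"
    and "P = Ppoly"
  shows "compact P
    \<and> (\<forall>i::'r. lattice_polytope (phi i ` P))
    \<and> integral_PL_polytope P
    \<and> chart_GF P"
proof -
  have PP: "P = Pc" using assms(3) Ppoly_eq[OF assms(2)] by simp
  have cP: "compact P" unfolding PP by (rule compact_Pc)
  have lP: "\<forall>i::'r. lattice_polytope (phi i ` P)" unfolding PP phi_Pc using lattice_Qc by blast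
  let ?F = "v_rd ` (Sset :: ((real^'r) \<times> (real^'d::{finite,linorder})) set)"
  have eqF: "P = MMR \<inter> \<Inter>{Hs p (-1) | p. p \<in> ?F}"
    unfolding assms(3) Ppoly_def by blast
  have plP: "PL_polytope P"
    unfolding PL_polytope_def
  proof (intro conjI exI[where x="(\<lambda>p. (p, -1::real)) ` ?F"])
    show "compact P" by (rule cP)
    show "finite ((\<lambda>p. (p, -1::real)) ` ?F)" using vrd_Sset_finite[OF assms(2)] by (rule finite_imageI)
    show "\<forall>(p, c)\<in>(\<lambda>p. (p, -1::real)) ` ?F. p \<in> Tset \<and> c \<in> \<int>"
      using vrd_Sset_T[OF assms(2)] by auto
    show "P = MMR \<inter> \<Inter>{Hs p c | p c. (p, c) \<in> (\<lambda>p. (p, -1::real)) ` ?F}"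
      unfolding eqF by blast
  qed
  have iP: "integral_PL_polytope P" unfolding integral_PL_polytope_def using plP lP by blast
  have gP: "chart_GF P" unfolding chart_GF_def
    using iP eqF vrd_Sset_finite[OF assms(2)] vrd_Sset_T[OF assms(2)] by blast
  show ?thesis using cP lP iP gP by blast
qed

end
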